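(* Let $(\Phi,\Sigma_\Phi)$ be a measurable space, $\pi$ a probability measure on it, and $\nu$ a probability measure on $(\Phi,\Sigma_\Phi)$ absolutely continuous with respect to $\pi$. (i) For all $f\in\mathcal{F}_c$, all $\lambda>0$, all $c\in\mathbb{R}$ and all $\pi$-measurable $h\colon\Phi\to\mathbb{R}$, $$\mathbb{E}_\nu[h]\leq \lambda^{-1}\tilde{\mathcal{D}}_{f,\pi}^*\big(\lambda(h-c)\big)+c+\lambda^{-1}\mathcal{D}_f(\nu,\pi).$$ (ii) For all convex $f$ with $f(1)=0$, all $\lambda>0$, all $c\in\mathbb{R}$ and all $\pi$-measurable $h\colon\Phi\to\mathbb{R}$, $$\mathbb{E}_\nu[h]\leq \lambda^{-1}\mathcal{L}_{f,\pi}\big(\lambda(h-c)\big)+c+\lambda^{-1}\mathcal{D}_f(\nu,\pi).$$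
   Context: $\mathcal{F}$ is the set of convex functions $f\colon\mathbb{R}\to\mathbb{R}\cup\{+\infty\}$ with $f(1)=0$, $f(x)\in\mathbb{R}$ for all $x>0$, and $f(x)=+\infty$ for all $x<0$; $\mathcal{F}_c$ is the subset of $f\in\mathcal{F}$ that are continuous on $[0,\infty)$, twice differentiable on $(0,\infty)$, and such that $1/f''$ is concave on $(0,\infty)$. For such $f$ and probability measures $\nu,\mu$, the $f$-divergence is $\mathcal{D}_f(\nu,\mu)=\int f\big(\frac{\mathrm{d}\nu}{\mathrm{d}\mu}\big)\mathrm{d}\mu$ if $\nu\ll\mu$ and $+\infty$ otherwise. The Legendre transform is $f^*(t)=\sup_{x\geq 0}\{xt-f(x)\}$; $f'$ and ${f^*}'$ denote derivatives (or any element of the subdifferential where not differentiable), with $f'(0):=\inf\bigcup_{x>0}f'(x)$. Define $\mathcal{L}_{f,\pi}(h):=\mathbb{E}_\pi[f^*(h)]$ (equal to $+\infty$ if $f^*(h)$ is not $\pi$-integrable), and $$\tilde{\mathcal{D}}_{f,\pi}^*(h):=\mathbb{E}_\pi[f^*(h)]+f'\big(\mathbb{E}_\pi[{f^*}'(h)]\big)-f^*\big(f'\big(\mathbb{E}_\pi[{f^*}'(h)]\big)\big),$$ with the conventions that $\tilde{\mathcal{D}}_{f,\pi}^*(h)=+\infty$ if $f^*(h)$ is not $\pi$-integrable, and $\tilde{\mathcal{D}}_{f,\pi}^*(h)=\mathbb{E}_\pi[f^*(h)]$ if ${f^*}'(h)$ is not $\pi$-integrable. $\mathbb{E}_\nu[\cdot]=\int\cdot\,\mathrm{d}\nu$,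 $\mathbb{E}_\pi[\cdot]=\int\cdot\,\mathrm{d}\pi$. *)

theory Defs
  imports "HOL-Probability.Probability"
begin

text \<open>Functions f : R -> R \<union> {+\<infinity>} are modelled as real \<Rightarrow> ereal.\<close>

definition ereal_convex :: "(real \<Rightarrow> ereal) \<Rightarrow> bool" where
  "ereal_convex f \<longleftrightarrow>
     (\<forall>x y t. 0 \<le> t \<and> t \<le> 1 \<longrightarrow>
        f ((1 - t) * x + t * y) \<le> ereal (1 - t) * f x + ereal t * f y)"

definition fdivF :: "(real \<Rightarrow> ereal) \<Rightarrow> bool" where
  "fdivF f \<longleftrightarrow> ereal_convex f \<and> f 1 = 0 \<and> (\<forall>x. f x \<noteq> -\<infinity>)
     \<and> (\<forall>x>0. f x \<noteq> \<infinity>) \<and> (\<forall>x<0. f x = \<infinity>)"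

text \<open>Real part of f (meaningful on (0,\<infinity>), where f is finite).\<close>
definition freal :: "(real \<Rightarrow> ereal) \<Rightarrow> real \<Rightarrow> real" where
  "freal f = (\<lambda>x. real_of_ereal (f x))"

definition fdivFc :: "(real \<Rightarrow> ereal) \<Rightarrow> bool" where
  "fdivFc f \<longleftrightarrow> fdivF f \<and> continuous_on {0..} f
     \<and> (\<forall>x>0. freal f differentiable (at x) \<and> deriv (freal f) differentiable (at x))
     \<and> concave_on {0<..} (\<lambda>x. 1 / deriv (deriv (freal f)) x)"

text \<open>f' on [0,\<infinity>): the derivative for x > 0, and f'(0) = inf of f'(x) over x > 0
  (possibly -\<infinity>, hence ereal-valued).\<close>
definition fder :: "(real \<Rightarrow> ereal) \<Rightarrow> real \<Rightarrow> ereal" where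
  "fder f x = (if x > 0 then ereal (deriv (freal f) x)
               else (INF y\<in>{0<..}. ereal (deriv (freal f) y)))"

definition fconj :: "(real \<Rightarrow> ereal) \<Rightarrow> ereal \<Rightarrow> ereal" where
  "fconj f t = (SUP x\<in>{0..}. ereal x * t - f x)"

definition eexp :: "'a measure \<Rightarrow> ('a \<Rightarrow> ereal) \<Rightarrow> ereal" where
  "eexp M g = enn2ereal (\<integral>\<^sup>+ x. e2ennreal (g x) \<partial>M)
              - enn2ereal (\<integral>\<^sup>+ x. e2ennreal (- g x) \<partial>M)"

definition fdiv :: "(real \<Rightarrow> ereal) \<Rightarrow> 'a measure \<Rightarrow> 'a measure \<Rightarrow> ereal" where
  "fdiv f \<nu> \<mu> = (if absolutely_continuous \<mu> \<nu> \<and> sets \<nu> = sets \<mu>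
      then eexp \<mu> (\<lambda>x. f (enn2real (RN_deriv \<mu> \<nu> x))) else \<infinity>)"

definition eintegrable :: "'a measure \<Rightarrow> ('a \<Rightarrow> ereal) \<Rightarrow> bool" where
  "eintegrable M g \<longleftrightarrow> (AE x in M. \<bar>g x\<bar> \<noteq> \<infinity>) \<and> integrable M (\<lambda>x. real_of_ereal (g x))"

definition Lfpi :: "(real \<Rightarrow> ereal) \<Rightarrow> 'a measure \<Rightarrow> ('a \<Rightarrow> real) \<Rightarrow> ereal" where
  "Lfpi f \<pi> h = (if eintegrable \<pi> (\<lambda>x. fconj f (ereal (h x)))
     then ereal (\<integral>x. real_of_ereal (fconj f (ereal (h x))) \<partial>\<pi>) else \<infinity>)"

text \<open>Tilde D^*_{f,\<pi>}(h), with fs' a chosen (sub)derivative of f*.\<close>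
definition Dtil :: "(real \<Rightarrow> ereal) \<Rightarrow> (real \<Rightarrow> real) \<Rightarrow> 'a measure \<Rightarrow> ('a \<Rightarrow> real) \<Rightarrow> ereal" where
  "Dtil f fs' \<pi> h =
    (if \<not> eintegrable \<pi> (\<lambda>x. fconj f (ereal (h x))) then \<infinity>
     else if \<not> integrable \<pi> (\<lambda>x. fs' (h x)) then Lfpi f \<pi> h
     else (let m = (\<integral>x. fs' (h x) \<partial>\<pi>)
           in Lfpi f \<pi> h + fder f m - fconj f (fder f m)))"

definition conj_subgrad :: "(real \<Rightarrow> ereal) \<Rightarrow> (real \<Rightarrow> real) \<Rightarrow> bool" where
  "conj_subgrad f fs' \<longleftrightarrow> (\<forall>t. fconj f (ereal t) < \<infinity> \<longrightarrow>
      (\<forall>s. fconj f (ereal t) + ereal (fs' t * (s - t)) \<le> fconj f (ereal s)))"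

end

theory Submission
  imports Defs
begin

lemma cs_ineq:
  fixes a b qq q1 q2 l :: real
  assumes q1: "q1 > 0" and q2: "q2 > 0" and l0: "0 \<le> l" and l1: "l \<le> 1"
    and qq: "qq \<ge> (1-l)*q1 + l*q2"
  shows "((1-l)*a + l*b)^2 / qq \<le> (1-l)*a^2/q1 + l*b^2/q2"
proof -
  define QQ where "QQ = (1-l)*q1 + l*q2"
  have QQ: "QQ > 0"
  proof (cases "l = 0")
    case True then show ?thesis using q1 by (simp add: QQ_def)
  next
    case False then have "l > 0" using l0 by simp
    then have "l*q2 > 0" using q2 by simp
    moreover have "(1-l)*q1 \<ge> 0" using l1 q1 by simp
    ultimately show ?thesis by (simp add: QQ_def)
  qed
  have "qq \<ge> QQ" using qq QQ_def by simp
  have s1: "((1-l)*a + l*b)^2 / qq \<le> ((1-l)*a + l*b)^2 / QQ"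
    using \<open>qq \<ge> QQ\<close> QQ by (intro divide_left_mono) auto
  have key: "a^2*q2/q1 + b^2*q1/q2 \<ge> 2*a*b"
  proof -
    have "(a*q2 - b*q1)^2/(q1*q2) \<ge> 0" using q1 q2 by simp
    also have "(a*q2 - b*q1)^2/(q1*q2) = a^2*q2/q1 + b^2*q1/q2 - 2*a*b"
      using q1 q2 by (simp add: field_simps power2_eq_square)
    finally show ?thesis by simp
  qed
  have e: "((1-l)*a^2/q1 + l*b^2/q2) * QQ - ((1-l)*a + l*b)^2
      = (1-l)*l*(a^2*q2/q1 + b^2*q1/q2 - 2*a*b)"
    unfolding QQ_def using q1 q2 by (simp add: field_simps power2_eq_square)
  have "(1-l)*l*(a^2*q2/q1 + b^2*q1/q2 - 2*a*b) \<ge> 0"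
    using key l0 l1 by simp
  then have "((1-l)*a + l*b)^2 \<le> ((1-l)*a^2/q1 + l*b^2/q2) * QQ" using e by linarith
  then have "((1-l)*a + l*b)^2 / QQ \<le> (1-l)*a^2/q1 + l*b^2/q2"
    using QQ by (simp add: divide_le_eq)
  then show ?thesis using s1 by linarith
qed

lemma taylor_breg:
  fixes F F' F'' :: "real \<Rightarrow> real"
  assumes dF: "\<And>x. x > 0 \<Longrightarrow> (F has_real_derivative F' x) (at x)"
    and dF': "\<And>x. x > 0 \<Longrightarrow> (F' has_real_derivative F'' x) (at x)"
    and X: "X > 0" and Y: "Y > 0"
  shows "((\<lambda>s. (1-s)*(X-Y)^2*F''(Y + s*(X-Y))) has_integral (F X - F Y - F' Y*(X-Y))) {0..1}"
proof -
  define \<rho> where "\<rho> s = (1-s)*F'(Y + s*(X-Y))*(X-Y) + F(Y + s*(X-Y))" for s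
  have P: "Y + s*(X-Y) > 0" if "s \<in> {0..1}" for s
  proof -
    have "Y + s*(X-Y) = (1-s)*Y + s*X" by (simp add: algebra_simps)
    moreover have "(1-s)*Y \<ge> 0" "s*X \<ge> 0" using that X Y by auto
    moreover have "(1-s)*Y > 0 \<or> s*X > 0" using that X Y by (cases "s = 1") auto
    ultimately show ?thesis by linarith
  qed
  have der: "(\<rho> has_real_derivative (1-s)*(X-Y)^2*F''(Y + s*(X-Y))) (at s)" if s: "s \<in> {0..1}" for s
  proof -
    have lin: "((\<lambda>s. Y + s*(X-Y)) has_real_derivative (X-Y)) (at s)"
      by (auto intro!: derivative_eq_intros)
    have d1: "((\<lambda>s. F (Y + s*(X-Y))) has_real_derivative F'(Y + s*(X-Y)) * (X-Y)) (at s)"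
      using DERIV_chain2[OF dF[OF P[OF s]] lin] .
    have d2: "((\<lambda>s. F' (Y + s*(X-Y))) has_real_derivative F''(Y + s*(X-Y)) * (X-Y)) (at s)"
      using DERIV_chain2[OF dF'[OF P[OF s]] lin] .
    have "(\<rho> has_real_derivative
        ((-1)*F'(Y + s*(X-Y)) + (1-s)*(F''(Y + s*(X-Y)) * (X-Y)))*(X-Y) + F'(Y + s*(X-Y)) * (X-Y)) (at s)"
    proof -
      have a: "((\<lambda>s. 1 - s) has_real_derivative -1) (at s)"
        by (auto intro!: derivative_eq_intros)
      have b: "((\<lambda>s. (1-s)*F'(Y + s*(X-Y))) has_real_derivative
           (-1)*F'(Y + s*(X-Y)) + (F''(Y + s*(X-Y)) * (X-Y))*(1-s)) (at s)"
        using DERIV_mult[OF a d2] by simp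
      have c: "((\<lambda>s. (1-s)*F'(Y + s*(X-Y))*(X-Y)) has_real_derivative
           ((-1)*F'(Y + s*(X-Y)) + (F''(Y + s*(X-Y)) * (X-Y))*(1-s))*(X-Y)) (at s)"
        using DERIV_cmult_right[OF b] by simp
      show ?thesis unfolding \<rho>_def using DERIV_add[OF c d1] by (simp add: algebra_simps)
    qed
    moreover have "((-1)*F'(Y + s*(X-Y)) + (1-s)*(F''(Y + s*(X-Y)) * (X-Y)))*(X-Y) + F'(Y + s*(X-Y)) * (X-Y)
       = (1-s)*(X-Y)^2*F''(Y + s*(X-Y))" by (simp add: algebra_simps power2_eq_square)
    ultimately show ?thesis by simp
  qed
  have "((\<lambda>s. (1-s)*(X-Y)^2*F''(Y + s*(X-Y))) has_integral (\<rho> 1 - \<rho> 0)) {0..1}"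
    by (rule fundamental_theorem_of_calculus)
       (auto simp: has_real_derivative_iff_has_vector_derivative[symmetric]
         intro!: has_field_derivative_at_within der)
  moreover have "\<rho> 1 - \<rho> 0 = F X - F Y - F' Y*(X-Y)" unfolding \<rho>_def by simp
  ultimately show ?thesis by simp
qed

lemma concave_zero_spread:
  fixes w :: "real \<Rightarrow> real"
  assumes conc: "concave_on {0<..} w" and nn: "\<And>x. x > 0 \<Longrightarrow> w x \<ge> 0"
    and p: "p > 0" "w p = 0" and q: "q > 0"
  shows "w q = 0"
proof (cases q p rule: linorder_cases)
  case less
  define r where "r = 2*p - q"
  have r: "r > 0" using less p unfolding r_def by simp
  have "w ((1 - 1/2) * q + (1/2) * r) \<ge> (1 - 1/2) * w q + (1/2) * w r"
    using concave_onD[OF conc, of "1/2" q r] q r by simp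
  moreover have "(1 - 1/2) * q + (1/2) * r = p" unfolding r_def by (simp add: field_simps)
  ultimately have "0 \<ge> (1/2) * w q + (1/2) * w r" using p by simp
  then show ?thesis using nn[OF q] nn[OF r] by simp
next
  case equal then show ?thesis using p by simp
next
  case greater
  define r where "r = p/2"
  define t where "t = (q - p) / (q - r)"
  have r: "r > 0" "r < p" using p unfolding r_def by auto
  have t: "0 < t" "t < 1" unfolding t_def using greater r by (auto simp: field_simps)
  have ne: "q - r \<noteq> 0" using greater r by simp
  have t1: "1 - t = (p - r)/(q - r)" unfolding t_def using ne by (simp add: field_simps)
  have "(1 - t) * q + t * r = ((p - r)*q + (q - p)*r)/(q - r)"
    unfolding t1 unfolding t_def by (simp add: add_divide_distrib)
  also have "(p - r)*q + (q - p)*r = p*(q - r)" by (simp add: algebra_simps)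
  finally have "(1 - t) * q + t * r = p" using ne by simp
  moreover have "w ((1 - t) * q + t * r) \<ge> (1 - t) * w q + t * w r"
    using concave_onD[OF conc, of t q r] q r t by simp
  ultimately have "0 \<ge> (1 - t) * w q + t * w r" using p by simp
  moreover have "t * w r \<ge> 0" using t nn[OF r(1)] by simp
  ultimately have "(1 - t) * w q \<le> 0" by linarith
  then have "w q \<le> 0" using t by (simp add: mult_le_0_iff)
  then show ?thesis using nn[OF q] by simp
qed

lemma breg_plane:
  fixes F F' F'' :: "real \<Rightarrow> real"
  assumes dF: "\<And>x. x > 0 \<Longrightarrow> (F has_real_derivative F' x) (at x)"
    and dF': "\<And>x. x > 0 \<Longrightarrow> (F' has_real_derivative F'' x) (at x)"
    and nn: "\<And>x. x > 0 \<Longrightarrow> F'' x \<ge> 0"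
    and conc: "concave_on {0<..} (\<lambda>x. 1 / F'' x)"
    and x: "x > 0" and y: "y > 0" and m: "m > 0"
  shows "F x - F y - F' y*(x-y) \<ge>
    (F 1 - F m - F' m*(1-m)) + (F' 1 - F' m)*(x-1) - F'' m*(1-m)*(y-m)"
proof (cases "\<exists>p>0. F'' p = 0")
  case True
  then obtain p where p: "p > 0" "F'' p = 0" by blast
  have z: "F'' q = 0" if "q > 0" for q
  proof -
    have "1 / F'' q = 0"
      by (rule concave_zero_spread[OF conc, of p q]) (use nn p that in auto)
    then show ?thesis by simp
  qed
  have "\<exists>c. \<forall>x\<in>{0<..}. F' x = (c::real)"
  proof (rule has_field_derivative_zero_constant)
    fix x :: real assume "x \<in> {0<..}"
    then have "(F' has_real_derivative 0) (at x)" using dF'[of x] z[of x] by simp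
    then show "(F' has_real_derivative 0) (at x within {0<..})" by (rule has_field_derivative_at_within)
  qed auto
  then obtain c where c: "\<And>x. x > 0 \<Longrightarrow> F' x = c" by auto
  have "\<exists>d. \<forall>x\<in>{0<..}. F x - c * x = (d::real)"
  proof (rule has_field_derivative_zero_constant)
    fix x :: real assume "x \<in> {0<..}"
    then have "((\<lambda>x. F x - c * x) has_real_derivative F' x - c) (at x)"
      using dF by (auto intro!: derivative_eq_intros)
    moreover have "F' x - c = 0" using c[of x] \<open>x \<in> {0<..}\<close> by simp
    ultimately have "((\<lambda>x. F x - c * x) has_real_derivative 0) (at x)" by simp
    then show "((\<lambda>x. F x - c * x) has_real_derivative 0) (at x within {0<..})"
      by (rule has_field_derivative_at_within)
  next
    show "convex {0::real<..}" by (rule convex_real_interval)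
  qed
  then obtain d where d0: "\<forall>x\<in>{0<..}. F x - c * x = d" by blast
  have d: "F x = c * x + d" if "x > 0" for x using d0 that by force
  have l0: "F x - F y - F' y*(x-y) = 0"
    unfolding d[OF x] d[OF y] c[OF y] by (simp add: algebra_simps)
  have r0: "F 1 - F m - F' m*(1-m) = 0"
    unfolding d[OF m] d[of 1, simplified] c[OF m] by (simp add: algebra_simps)
  have r1: "F' 1 - F' m = 0" unfolding c[OF m] c[of 1, simplified] by simp
  show ?thesis unfolding l0 r0 r1 z[OF m] by simp
next
  case False
  then have pos: "F'' p > 0" if "p > 0" for p using nn[OF that] that by force
  define X where "X t = 1 + t*(x-1)" for t
  define Y where "Y t = m + t*(y-m)" for t
  define k where "k t = F (X t) - F (Y t) - F' (Y t) * (X t - Y t)" for t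
  define J where "J = {t. 0 < X t} \<inter> {t. 0 < Y t}"
  have openJ: "open J" unfolding J_def X_def Y_def
    by (intro open_Int open_Collect_less) (auto intro!: continuous_intros)
  have convJ: "convex J" unfolding J_def
  proof (intro convex_Int)
    show "convex {t. 0 < X t}" unfolding X_def convex_alt
    proof (safe)
      fix a b u :: real assume h: "0 < 1 + a*(x-1)" "0 < 1 + b*(x-1)" "0 \<le> u" "u \<le> 1"
      have "1 + ((1-u)*a + u*b)*(x-1) = (1-u)*(1 + a*(x-1)) + u*(1 + b*(x-1))"
        by (simp add: algebra_simps)
      moreover have "(1-u)*(1 + a*(x-1)) \<ge> 0" "u*(1 + b*(x-1)) \<ge> 0" using h by auto
      moreover have "(1-u)*(1 + a*(x-1)) > 0 \<or> u*(1 + b*(x-1)) > 0" using h by (cases "u = 1") auto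
      ultimately show "0 < 1 + ((1-u) *\<^sub>R a + u *\<^sub>R b)*(x-1)" by auto
    qed
    show "convex {t. 0 < Y t}" unfolding Y_def convex_alt
    proof (safe)
      fix a b u :: real assume h: "0 < m + a*(y-m)" "0 < m + b*(y-m)" "0 \<le> u" "u \<le> 1"
      have "m + ((1-u)*a + u*b)*(y-m) = (1-u)*(m + a*(y-m)) + u*(m + b*(y-m))"
        by (simp add: algebra_simps)
      moreover have "(1-u)*(m + a*(y-m)) \<ge> 0" "u*(m + b*(y-m)) \<ge> 0" using h by auto
      moreover have "(1-u)*(m + a*(y-m)) > 0 \<or> u*(m + b*(y-m)) > 0" using h by (cases "u = 1") auto
      ultimately show "0 < m + ((1-u) *\<^sub>R a + u *\<^sub>R b)*(y-m)" by auto
    qed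
  qed
  have J0: "0 \<in> J" and J1: "1 \<in> J" unfolding J_def X_def Y_def using x y m by auto
  define q where "q t s = (1-s)*(X t - Y t)^2*F''(Y t + s*(X t - Y t))" for t s
  have hi: "((q t) has_integral k t) {0..1}" if "t \<in> J" for t
    unfolding q_def k_def using taylor_breg[OF dF dF', of "X t" "Y t"] that unfolding J_def by auto
  have Ppos: "Y t + s*(X t - Y t) > 0" if "t \<in> J" "s \<in> {0..1}" for t s
  proof -
    have "Y t + s*(X t - Y t) = (1-s)*Y t + s*X t" by (simp add: algebra_simps)
    moreover have "(1-s)*Y t \<ge> 0" "s*X t \<ge> 0" using that unfolding J_def by auto
    moreover have "(1-s)*Y t > 0 \<or> s*X t > 0" using that unfolding J_def by (cases "s = 1") auto
    ultimately show ?thesis by linarith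
  qed
  have convk: "convex_on J k"
  proof (rule convex_onI[OF _ convJ])
    fix l t1 t2 :: real assume l: "0 < l" "l < 1" and t1: "t1 \<in> J" and t2: "t2 \<in> J"
    define tm where "tm = (1-l)*t1 + l*t2"
    have tm: "tm \<in> J" using convexD[OF convJ t1 t2, of "1-l" l] l unfolding tm_def by simp
    have pw: "q tm s \<le> (1-l) * q t1 s + l * q t2 s" if s: "s \<in> {0..1}" for s
    proof -
      define w where "w z = 1 / F'' z" for z
      define P1 where "P1 = Y t1 + s*(X t1 - Y t1)"
      define P2 where "P2 = Y t2 + s*(X t2 - Y t2)"
      have P1: "P1 > 0" unfolding P1_def using Ppos[OF t1 s] .
      have P2: "P2 > 0" unfolding P2_def using Ppos[OF t2 s] .
      have Um: "X tm - Y tm = (1-l)*(X t1 - Y t1) + l*(X t2 - Y t2)"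
        unfolding tm_def X_def Y_def by (simp add: algebra_simps)
      have Pm: "Y tm + s*(X tm - Y tm) = (1-l)*P1 + l*P2"
        unfolding tm_def X_def Y_def P1_def P2_def by (simp add: algebra_simps)
      have wc: "w ((1-l)*P1 + l*P2) \<ge> (1-l)*w P1 + l*w P2"
        using concave_onD[OF conc, of l P1 P2] l P1 P2 unfolding w_def by simp
      have cs: "((1-l)*(X t1 - Y t1) + l*(X t2 - Y t2))^2 / w ((1-l)*P1 + l*P2)
         \<le> (1-l)*(X t1 - Y t1)^2 / w P1 + l*(X t2 - Y t2)^2 / w P2"
        by (rule cs_ineq) (use l P1 P2 pos wc in \<open>auto simp: w_def\<close>)
      have "(X tm - Y tm)^2*F''((1-l)*P1 + l*P2)
         \<le> (1-l)*((X t1 - Y t1)^2*F'' P1) + l*((X t2 - Y t2)^2*F'' P2)"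
        using cs unfolding Um w_def by (simp add: divide_inverse mult.assoc)
      then have "(X tm - Y tm)^2*F''(Y tm + s*(X tm - Y tm))
         \<le> (1-l)*((X t1 - Y t1)^2*F'' P1) + l*((X t2 - Y t2)^2*F'' P2)"
        by (simp only: Pm)
      then have "(1-s)*((X tm - Y tm)^2*F''(Y tm + s*(X tm - Y tm)))
         \<le> (1-s)*((1-l)*((X t1 - Y t1)^2*F'' P1) + l*((X t2 - Y t2)^2*F'' P2))"
        using s by (intro mult_left_mono) auto
      then show ?thesis unfolding q_def P1_def P2_def by (simp add: algebra_simps)
    qed
    have "((\<lambda>s. (1-l) * q t1 s + l * q t2 s) has_integral (1-l) * k t1 + l * k t2) {0..1}"
      by (intro has_integral_add has_integral_mult_right hi t1 t2)
    from has_integral_le[OF hi[OF tm] this pw] show "k ((1 - l) *\<^sub>R t1 + l *\<^sub>R t2) \<le> (1 - l) * k t1 + l * k t2"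
      unfolding tm_def by simp
  qed
  define k' where "k' = (F' 1 - F' m)*(x-1) - F'' m*(1-m)*(y-m)"
  have dk: "(k has_real_derivative k') (at 0)"
  proof -
    have dX: "(X has_real_derivative (x-1)) (at 0)" unfolding X_def by (auto intro!: derivative_eq_intros)
    have dY: "(Y has_real_derivative (y-m)) (at 0)" unfolding Y_def by (auto intro!: derivative_eq_intros)
    have X0: "X 0 = 1" and Y0: "Y 0 = m" unfolding X_def Y_def by auto
    have a: "((\<lambda>t. F (X t)) has_real_derivative F' 1 * (x-1)) (at 0)"
      using DERIV_chain2[OF dF[of "X 0"] dX] X0 by simp
    have b: "((\<lambda>t. F (Y t)) has_real_derivative F' m * (y-m)) (at 0)"
      using DERIV_chain2[OF dF[of "Y 0"] dY] Y0 m by simp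
    have c: "((\<lambda>t. F' (Y t)) has_real_derivative F'' m * (y-m)) (at 0)"
      using DERIV_chain2[OF dF'[of "Y 0"] dY] Y0 m by simp
    have e: "((\<lambda>t. X t - Y t) has_real_derivative (x-1) - (y-m)) (at 0)"
      using DERIV_diff[OF dX dY] .
    have "(k has_real_derivative F' 1 * (x-1) - F' m * (y-m)
          - (F'' m * (y-m) * (X 0 - Y 0) + ((x-1) - (y-m)) * F' (Y 0))) (at 0)"
      unfolding k_def[abs_def] by (intro DERIV_diff a b DERIV_mult c e)
    then show ?thesis unfolding k'_def X0 Y0 by (simp add: algebra_simps)
  qed
  have "k 1 - k 0 \<ge> k' * (1 - 0)"
    by (rule convex_on_imp_above_tangent[OF convk convex_connected[OF convJ]])
       (use openJ J0 J1 dk in \<open>auto simp: interior_open intro: has_field_derivative_at_within\<close>)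
  moreover have "k 1 = F x - F y - F' y*(x-y)" "k 0 = F 1 - F m - F' m*(1-m)"
    unfolding k_def X_def Y_def by auto
  ultimately show ?thesis unfolding k'_def by simp
qed

lemma fdivF_props:
  assumes "fdivF f"
  shows "ereal_convex f" "f 1 = 0" "\<And>x. f x \<noteq> -\<infinity>" "\<And>x. x > 0 \<Longrightarrow> f x \<noteq> \<infinity>"
    "\<And>x. x < 0 \<Longrightarrow> f x = \<infinity>"
  using assms unfolding fdivF_def by auto

lemma fdivF_fin:
  assumes "fdivF f" "f x \<noteq> \<infinity>"
  shows "f x = ereal (freal f x)" "x \<ge> 0"
proof -
  show "f x = ereal (freal f x)" using assms fdivF_props[OF assms(1)] unfolding freal_def
    by (cases "f x") auto
  show "x \<ge> 0" using assms fdivF_props(5)[OF assms(1), of x] by force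
qed

lemma fdivF_pos:
  assumes "fdivF f" "x > 0"
  shows "f x = ereal (freal f x)"
  by (rule fdivF_fin(1)[OF assms(1) fdivF_props(4)[OF assms]])

lemma fdivF_convex_dom:
  assumes "fdivF f"
  shows "convex_on {x. f x \<noteq> \<infinity>} (freal f)"
proof -
  have cv: "f ((1 - t) * a + t * b) \<le> ereal (1 - t) * f a + ereal t * f b"
    if "0 \<le> t" "t \<le> 1" for a b t
    using fdivF_props(1)[OF assms] that unfolding ereal_convex_def by auto
  have dom: "f ((1 - t) * a + t * b) \<noteq> \<infinity>" "f ((1 - t) * a + t * b) = ereal ((1-t) * freal f a + t * freal f b) \<or>
      f ((1 - t) * a + t * b) < ereal ((1-t) * freal f a + t * freal f b)"
    if "0 \<le> t" "t \<le> 1" "f a \<noteq> \<infinity>" "f b \<noteq> \<infinity>" for a b t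
  proof -
    have "f ((1 - t) * a + t * b) \<le> ereal (1 - t) * ereal (freal f a) + ereal t * ereal (freal f b)"
      using cv[OF that(1,2), of a b] fdivF_fin(1)[OF assms that(3)] fdivF_fin(1)[OF assms that(4)] by simp
    also have "\<dots> = ereal ((1-t) * freal f a + t * freal f b)" by simp
    finally have le: "f ((1 - t) * a + t * b) \<le> ereal ((1-t) * freal f a + t * freal f b)" .
    then show "f ((1 - t) * a + t * b) \<noteq> \<infinity>" by auto
    show "f ((1 - t) * a + t * b) = ereal ((1-t) * freal f a + t * freal f b) \<or>
      f ((1 - t) * a + t * b) < ereal ((1-t) * freal f a + t * freal f b)" using le by auto
  qed
  show ?thesis
  proof (rule convex_onI)
    fix t a b :: real assume t: "0 < t" "t < 1" and a: "a \<in> {x. f x \<noteq> \<infinity>}" and b: "b \<in> {x. f x \<noteq> \<infinity>}"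
    have ne: "f ((1 - t) * a + t * b) \<noteq> \<infinity>" using dom(1)[of t a b] t a b by auto
    have "ereal (freal f ((1 - t) * a + t * b)) \<le> ereal ((1-t) * freal f a + t * freal f b)"
      using dom(2)[of t a b] t a b fdivF_fin(1)[OF assms ne] by auto
    then show "freal f ((1 - t) *\<^sub>R a + t *\<^sub>R b) \<le> (1 - t) * freal f a + t * freal f b" by simp
  next
    show "convex {x. f x \<noteq> \<infinity>}"
    proof (rule convexI)
      fix x y u v :: real assume h: "x \<in> {x. f x \<noteq> \<infinity>}" "y \<in> {x. f x \<noteq> \<infinity>}" "0 \<le> u" "0 \<le> v" "u + v = 1"
      then have "u = 1 - v" by simp
      then have "u *\<^sub>R x + v *\<^sub>R y = (1 - v) * x + v * y" by simp
      moreover have "f ((1 - v) * x + v * y) \<noteq> \<infinity>" using dom(1)[of v x y] h by simp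
      ultimately show "u *\<^sub>R x + v *\<^sub>R y \<in> {x. f x \<noteq> \<infinity>}" by (metis mem_Collect_eq)
    qed
  qed
qed

lemma fdivF_tangent:
  assumes "fdivF f" "z > 0" "(freal f has_real_derivative D) (at z)" "f x \<noteq> \<infinity>"
  shows "freal f x \<ge> freal f z + D * (x - z)"
proof -
  let ?A = "{x. f x \<noteq> \<infinity>}"
  have sub: "{0<..} \<subseteq> ?A" using fdivF_props(4)[OF assms(1)] by auto
  have "z \<in> interior ?A" using interior_maximal[OF sub] assms(2) by auto
  have "freal f x - freal f z \<ge> D * (x - z)"
    by (rule convex_on_imp_above_tangent[OF fdivF_convex_dom[OF assms(1)]])
       (use assms \<open>z \<in> interior ?A\<close> convex_on_imp_convex[OF fdivF_convex_dom[OF assms(1)]]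
        in \<open>auto intro: convex_connected has_field_derivative_at_within\<close>)
  then show ?thesis by simp
qed

lemma fdivF_tangent_ereal:
  assumes "fdivF f" "z > 0" "(freal f has_real_derivative D) (at z)"
  shows "ereal x * ereal D - f x \<le> ereal (z * D - freal f z)"
proof (cases "f x = \<infinity>")
  case True then show ?thesis by simp
next
  case False
  then have "f x = ereal (freal f x)" using fdivF_fin[OF assms(1)] by auto
  moreover have "freal f x \<ge> freal f z + D * (x - z)" using fdivF_tangent[OF assms False] .
  ultimately show ?thesis by (simp add: algebra_simps)
qed

lemma fconj_upper:
  assumes "x \<ge> 0"
  shows "ereal x * t - f x \<le> fconj f t"
  unfolding fconj_def using assms by (intro SUP_upper2[of x]) auto

lemma fconj_at_deriv:
  assumes "fdivF f" "z > 0" "(freal f has_real_derivative D) (at z)"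
  shows "fconj f (ereal D) = ereal (z * D - freal f z)"
proof (rule antisym)
  show "fconj f (ereal D) \<le> ereal (z * D - freal f z)"
    unfolding fconj_def using fdivF_tangent_ereal[OF assms] by (intro SUP_least) auto
  have "ereal z * ereal D - f z \<le> fconj f (ereal D)" using fconj_upper[of z "ereal D" f] assms(2) by simp
  then show "ereal (z * D - freal f z) \<le> fconj f (ereal D)"
    using fdivF_pos[OF assms(1,2)] by simp
qed

lemma fconj_mono:
  assumes "fdivF f" "s \<le> t"
  shows "fconj f (ereal s) \<le> fconj f (ereal t)"
  unfolding fconj_def
proof (rule SUP_mono)
  fix x :: real assume x: "x \<in> {0..}"
  have "ereal x * ereal s - f x \<le> ereal x * ereal t - f x"
  proof (cases "f x")
    case (real r)
    then show ?thesis using x assms(2) by (simp add: mult_left_mono)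
  qed (use fdivF_props(3)[OF assms(1)] in auto)
  then show "\<exists>y\<in>{0..}. ereal x * ereal s - f x \<le> ereal y * ereal t - f y" using x by blast
qed

lemma fconj_ge:
  assumes "fdivF f"
  shows "fconj f (ereal t) \<ge> ereal t"
  using fconj_upper[of 1 "ereal t" f] fdivF_props(2)[OF assms] by simp

lemma fdivF_lower_conj:
  assumes "fdivF f" "fconj f (ereal t) \<noteq> \<infinity>" "x \<ge> 0"
  shows "f x \<ge> ereal (x * t - real_of_ereal (fconj f (ereal t)))"
proof -
  have fin: "fconj f (ereal t) = ereal (real_of_ereal (fconj f (ereal t)))"
    using assms(2) fconj_ge[OF assms(1), of t] by (cases "fconj f (ereal t)") auto
  have "ereal x * ereal t - f x \<le> fconj f (ereal t)" using fconj_upper[OF assms(3)] .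
  then have "ereal x * ereal t - f x \<le> ereal (real_of_ereal (fconj f (ereal t)))" using fin by simp
  then show ?thesis
    using fdivF_props(3)[OF assms(1), of x] by (cases "f x") (auto simp: algebra_simps)
qed

lemma fc_props:
  assumes "fdivFc f"
  shows "fdivF f" "continuous_on {0..} f"
    "\<And>x. x > 0 \<Longrightarrow> (freal f has_real_derivative deriv (freal f) x) (at x)"
    "\<And>x. x > 0 \<Longrightarrow> (deriv (freal f) has_real_derivative deriv (deriv (freal f)) x) (at x)"
    "concave_on {0<..} (\<lambda>x. 1 / deriv (deriv (freal f)) x)"
  using assms unfolding fdivFc_def by (auto simp: DERIV_deriv_iff_real_differentiable)

lemma fc_mono:
  assumes "fdivFc f" "0 < a" "a \<le> b"
  shows "deriv (freal f) a \<le> deriv (freal f) b"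
proof -
  note P = fc_props[OF assms(1)]
  have b: "b > 0" using assms by simp
  have 1: "freal f b \<ge> freal f a + deriv (freal f) a * (b - a)"
    by (rule fdivF_tangent[OF P(1) assms(2) P(3)[OF assms(2)]]) (use fdivF_props(4)[OF P(1) b] in simp)
  have 2: "freal f a \<ge> freal f b + deriv (freal f) b * (a - b)"
    by (rule fdivF_tangent[OF P(1) b P(3)[OF b]]) (use fdivF_props(4)[OF P(1) assms(2)] in simp)
  from 1 2 have "(deriv (freal f) b - deriv (freal f) a) * (b - a) \<ge> 0" by (simp add: algebra_simps)
  then show ?thesis using assms(3)
    by (cases "a = b") (auto simp: zero_le_mult_iff)
qed

lemma fc_nn:
  assumes "fdivFc f" "x > 0"
  shows "deriv (deriv (freal f)) x \<ge> 0"
proof (rule ccontr)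
  assume "\<not> ?thesis"
  then have "deriv (deriv (freal f)) x < 0" by simp
  from DERIV_neg_dec_right[OF fc_props(4)[OF assms] this]
  obtain d where d: "d > 0" "\<And>h. h > 0 \<Longrightarrow> h < d \<Longrightarrow> deriv (freal f) x > deriv (freal f) (x + h)" by blast
  have "deriv (freal f) x > deriv (freal f) (x + d/2)" using d by simp
  moreover have "deriv (freal f) x \<le> deriv (freal f) (x + d/2)" using fc_mono[OF assms(1,2)] d by simp
  ultimately show False by simp
qed

lemma fc_breg:
  assumes "fdivFc f" "x > 0" "y > 0" "m > 0"
  shows "freal f x - freal f y - deriv (freal f) y*(x-y) \<ge>
    (freal f 1 - freal f m - deriv (freal f) m*(1-m)) + (deriv (freal f) 1 - deriv (freal f) m)*(x-1)
     - deriv (deriv (freal f)) m*(1-m)*(y-m)"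
  using breg_plane[OF fc_props(3,4)[OF assms(1)] fc_nn[OF assms(1)] fc_props(5)[OF assms(1)] assms(2-4)] .

lemma fc_cont:
  assumes "fdivFc f" "f 0 \<noteq> \<infinity>"
  shows "continuous_on {0..} (freal f)"
proof -
  note P = fc_props[OF assms(1)]
  have fin: "\<bar>f x\<bar> \<noteq> \<infinity>" if "x \<in> {0..}" for x
  proof -
    have "f x \<noteq> \<infinity>" using assms(2) fdivF_props(4)[OF P(1), of x] that by (cases "x = 0") auto
    then show ?thesis using fdivF_props(3)[OF P(1), of x] by auto
  qed
  have "continuous_on {0..} (real_of_ereal \<circ> f)" using continuous_on_iff_real[of "{0..}" f] fin P(2) by blast
  then show ?thesis unfolding freal_def comp_def by (simp add: o_def)
qed

lemma fc_right0:
  assumes "fdivFc f" "f 0 \<noteq> \<infinity>"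
  shows "(freal f \<longlongrightarrow> freal f 0) (at_right 0)"
proof -
  have "continuous_on {0..1} (freal f)" using continuous_on_subset[OF fc_cont[OF assms]] by auto
  then have "(freal f \<longlongrightarrow> freal f 0) (at 0 within {0..1})" unfolding continuous_on_def by auto
  moreover have "at (0::real) within {0..1} = at_right 0" by (rule at_within_Icc_at_right) simp
  ultimately show ?thesis by simp
qed

lemma fc_mvt:
  assumes "fdivFc f" "f 0 \<noteq> \<infinity>" "y > 0" "\<And>z. z > 0 \<Longrightarrow> t \<le> deriv (freal f) z"
  shows "freal f y - freal f 0 \<ge> t * y"
proof -
  note P = fc_props[OF assms(1)]
  have "continuous_on {0..y} (freal f)" using continuous_on_subset[OF fc_cont[OF assms(1,2)]] by auto
  moreover have "freal f differentiable at x" if "0 < x" for x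
    using P(3)[OF that] by (auto simp: real_differentiable_def)
  ultimately obtain l z where lz: "0 < z" "z < y" "(freal f has_real_derivative l) (at z)"
     "freal f y - freal f 0 = (y - 0) * l"
    using MVT[OF assms(3)] by blast
  have "l = deriv (freal f) z" using DERIV_unique[OF lz(3) P(3)[OF lz(1)]] .
  then have "l \<ge> t" using assms(4)[OF lz(1)] by simp
  then show ?thesis using lz(4) assms(3) by (simp add: mult_left_mono mult.commute)
qed

abbreviation (input) "RHSb f m x y \<equiv> (freal f 1 - freal f m - deriv (freal f) m*(1-m))
   + (deriv (freal f) 1 - deriv (freal f) m)*(x-1) - deriv (deriv (freal f)) m*(1-m)*(y-m)"

lemma fc_breg_x0:
  assumes "fdivFc f" "f 0 \<noteq> \<infinity>" "y > 0" "m > 0"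
  shows "freal f 0 - freal f y - deriv (freal f) y*(0-y) \<ge> RHSb f m 0 y"
proof (rule tendsto_le[OF trivial_limit_at_right_real])
  show "((\<lambda>x. freal f x - freal f y - deriv (freal f) y*(x-y)) \<longlongrightarrow>
      freal f 0 - freal f y - deriv (freal f) y*(0-y)) (at_right 0)"
    by (intro tendsto_intros fc_right0[OF assms(1,2)])
  show "((\<lambda>x. RHSb f m x y) \<longlongrightarrow> RHSb f m 0 y) (at_right 0)"
    by (intro tendsto_intros)
  show "\<forall>\<^sub>F x in at_right 0. RHSb f m x y \<le> freal f x - freal f y - deriv (freal f) y*(x-y)"
    using eventually_at_right_less[of 0] fc_breg[OF assms(1) _ assms(3,4)]
    by (auto elim!: eventually_mono)
qed

lemma fc_breg_y0_pos:
  assumes "fdivFc f" "f 0 \<noteq> \<infinity>" "x > 0" "m > 0" "\<And>z. z > 0 \<Longrightarrow> t \<le> deriv (freal f) z"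
  shows "freal f x - freal f 0 - t * x \<ge> RHSb f m x 0"
proof (rule tendsto_le[OF trivial_limit_at_right_real])
  show "((\<lambda>y. freal f x - freal f 0 - t * x) \<longlongrightarrow> freal f x - freal f 0 - t * x) (at_right 0)"
    by simp
  show "((\<lambda>y. RHSb f m x y) \<longlongrightarrow> RHSb f m x 0) (at_right 0)"
    by (intro tendsto_intros)
  have "eventually (\<lambda>y. y < x) (at_right (0::real))"
    unfolding eventually_at_right_field using assms(3) by blast
  moreover have "eventually (\<lambda>y. y > 0) (at_right (0::real))" by (simp add: eventually_at_right_less)
  ultimately show "\<forall>\<^sub>F y in at_right 0. RHSb f m x y \<le> freal f x - freal f 0 - t * x"
  proof eventually_elim
    case (elim y)
    have "freal f y - freal f 0 \<ge> t * y" using fc_mvt[OF assms(1,2) elim(2) assms(5)] .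
    moreover have "(deriv (freal f) y - t) * (x - y) \<ge> 0" using assms(5)[OF elim(2)] elim by simp
    moreover have "freal f x - freal f y - deriv (freal f) y*(x-y) \<ge> RHSb f m x y"
      using fc_breg[OF assms(1,3) elim(2) assms(4)] .
    ultimately show ?case by (simp add: algebra_simps)
  qed
qed

lemma fc_breg_y0:
  assumes "fdivFc f" "f 0 \<noteq> \<infinity>" "x \<ge> 0" "m > 0" "\<And>z. z > 0 \<Longrightarrow> t \<le> deriv (freal f) z"
  shows "freal f x - freal f 0 - t * x \<ge> RHSb f m x 0"
proof (cases "x > 0")
  case True then show ?thesis using fc_breg_y0_pos[OF assms(1,2) _ assms(4,5)] by simp
next
  case False
  then have x0: "x = 0" using assms(3) by simp
  have "freal f 0 - freal f 0 - t * 0 \<ge> RHSb f m 0 0"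
  proof (rule tendsto_le[OF trivial_limit_at_right_real])
    show "((\<lambda>x. freal f x - freal f 0 - t * x) \<longlongrightarrow> freal f 0 - freal f 0 - t * 0) (at_right 0)"
      by (intro tendsto_intros fc_right0[OF assms(1,2)])
    show "((\<lambda>x. RHSb f m x 0) \<longlongrightarrow> RHSb f m 0 0) (at_right 0)"
      by (intro tendsto_intros)
    show "\<forall>\<^sub>F x in at_right 0. RHSb f m x 0 \<le> freal f x - freal f 0 - t * x"
      using eventually_at_right_less[of 0] fc_breg_y0_pos[OF assms(1,2) _ assms(4,5)]
      by (auto elim!: eventually_mono)
  qed
  then show ?thesis using x0 by simp
qed

lemma fconj_fin:
  assumes "fdivF f" "fconj f (ereal t) \<noteq> \<infinity>"
  shows "fconj f (ereal t) = ereal (real_of_ereal (fconj f (ereal t)))"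
  using assms fconj_ge[OF assms(1), of t] by (cases "fconj f (ereal t)") auto

lemma sg_basic:
  assumes fc: "fdivFc f" and sg: "conj_subgrad f fs'" and fin: "fconj f (ereal t) \<noteq> \<infinity>"
  shows "fs' t \<ge> 0" "\<And>z. z > 0 \<Longrightarrow> (z - fs' t) * (deriv (freal f) z - t) \<ge> 0"
proof -
  note P = fc_props[OF fc]
  define p where "p = real_of_ereal (fconj f (ereal t))"
  have pe: "fconj f (ereal t) = ereal p" unfolding p_def using fconj_fin[OF P(1) fin] .
  have sub: "ereal p + ereal (fs' t * (s - t)) \<le> fconj f (ereal s)" for s
    using sg fin pe unfolding conj_subgrad_def by (metis less_ereal.simps(4) ereal_less_PInfty)
  have "ereal p + ereal (fs' t * ((t - 1) - t)) \<le> fconj f (ereal t)"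
    using order.trans[OF sub[of "t - 1"] fconj_mono[OF P(1), of "t - 1" t]] by simp
  then show "fs' t \<ge> 0" using pe by simp
  fix z :: real assume z: "z > 0"
  have "ereal p + ereal (fs' t * (deriv (freal f) z - t)) \<le> fconj f (ereal (deriv (freal f) z))"
    using sub .
  also have "\<dots> = ereal (z * deriv (freal f) z - freal f z)"
    using fconj_at_deriv[OF P(1) z P(3)[OF z]] .
  finally have 1: "p + fs' t * (deriv (freal f) z - t) \<le> z * deriv (freal f) z - freal f z" by simp
  have "ereal z * ereal t - f z \<le> fconj f (ereal t)" using fconj_upper[of z "ereal t" f] z by simp
  then have 2: "z * t - freal f z \<le> p" using pe fdivF_pos[OF P(1) z] by simp
  from 1 2 show "(z - fs' t) * (deriv (freal f) z - t) \<ge> 0" by (simp add: algebra_simps)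
qed

lemma sg_pos:
  assumes fc: "fdivFc f" and sg: "conj_subgrad f fs'" and fin: "fconj f (ereal t) \<noteq> \<infinity>"
    and y: "fs' t > 0"
  shows "t = deriv (freal f) (fs' t)"
proof -
  note P = fc_props[OF fc]
  let ?y = "fs' t" and ?D = "deriv (freal f)"
  have c: "isCont ?D ?y" using DERIV_isCont[OF P(4)[OF y]] .
  then have lim: "(?D \<longlongrightarrow> ?D ?y) (at ?y)" by (simp add: isCont_def)
  have "?D ?y \<ge> t"
  proof (rule tendsto_le[OF trivial_limit_at_right_real])
    show "(?D \<longlongrightarrow> ?D ?y) (at_right ?y)" using tendsto_mono[OF at_le[of "{?y<..}" UNIV] lim] by simp
    show "((\<lambda>_. t) \<longlongrightarrow> t) (at_right ?y)" by simp
    show "\<forall>\<^sub>F z in at_right ?y. t \<le> ?D z"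
      using eventually_at_right_less[of ?y]
    proof (rule eventually_mono)
      fix z assume z: "?y < z"
      then have "(z - ?y) * (?D z - t) \<ge> 0" using sg_basic(2)[OF fc sg fin, of z] y by simp
      then show "t \<le> ?D z" using z by (simp add: zero_le_mult_iff)
    qed
  qed
  moreover have "?D ?y \<le> t"
  proof (rule tendsto_le[OF trivial_limit_at_left_real])
    show "(?D \<longlongrightarrow> ?D ?y) (at_left ?y)" using tendsto_mono[OF at_le[of "{..<?y}" UNIV] lim] by simp
    show "((\<lambda>_. t) \<longlongrightarrow> t) (at_left ?y)" by simp
    have "eventually (\<lambda>z. z > 0) (at_left ?y)" using y
      unfolding eventually_at_left_field by (intro exI[of _ 0]) auto
    moreover have "eventually (\<lambda>z. z < ?y) (at_left ?y)" by (simp add: eventually_at_filter)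
    ultimately show "\<forall>\<^sub>F z in at_left ?y. ?D z \<le> t"
    proof (eventually_elim)
      case (elim z)
      then have "(z - ?y) * (?D z - t) \<ge> 0" using sg_basic(2)[OF fc sg fin, of z] by simp
      then show "?D z \<le> t" using elim by (simp add: zero_le_mult_iff)
    qed
  qed
  ultimately show ?thesis by simp
qed

lemma sg_zero:
  assumes fc: "fdivFc f" and sg: "conj_subgrad f fs'" and fin: "fconj f (ereal t) \<noteq> \<infinity>"
    and y: "fs' t = 0"
  shows "\<And>z. z > 0 \<Longrightarrow> t \<le> deriv (freal f) z" "f 0 \<noteq> \<infinity>"
proof -
  note P = fc_props[OF fc]
  show le: "t \<le> deriv (freal f) z" if z: "z > 0" for z
    using sg_basic(2)[OF fc sg fin z] y z by (simp add: zero_le_mult_iff)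
  define B where "B = \<bar>freal f 1\<bar> + \<bar>t\<bar>"
  have bd: "f z \<le> ereal B" if z: "0 < z" "z < 1" for z
  proof -
    have "freal f 1 \<ge> freal f z + deriv (freal f) z * (1 - z)"
      by (rule fdivF_tangent[OF P(1) z(1) P(3)[OF z(1)]]) (simp add: fdivF_props(2)[OF P(1)])
    moreover have "deriv (freal f) z * (1 - z) \<ge> t * (1 - z)" using le[OF z(1)] z by (simp add: mult_right_mono)
    moreover have "t * (1 - z) \<ge> - \<bar>t\<bar>"
    proof -
      have "\<bar>t * (1 - z)\<bar> \<le> \<bar>t\<bar>" using z by (simp add: abs_mult mult_left_le)
      then show ?thesis by linarith
    qed
    ultimately have "freal f z \<le> B" unfolding B_def by linarith
    then show ?thesis using fdivF_pos[OF P(1) z(1)] by simp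
  qed
  have "continuous_on {0..1} f" using continuous_on_subset[OF P(2)] by auto
  then have "(f \<longlongrightarrow> f 0) (at 0 within {0..1})" unfolding continuous_on_def by auto
  moreover have "at (0::real) within {0..1} = at_right 0" by (rule at_within_Icc_at_right) simp
  ultimately have lim: "(f \<longlongrightarrow> f 0) (at_right 0)" by simp
  have "f 0 \<le> ereal B"
  proof (rule tendsto_le[OF trivial_limit_at_right_real _ lim])
    show "((\<lambda>_. ereal B) \<longlongrightarrow> ereal B) (at_right 0)" by simp
    have "eventually (\<lambda>z. z < 1) (at_right (0::real))"
      unfolding eventually_at_right_field by (intro exI[of _ 1]) auto
    then show "\<forall>\<^sub>F x in at_right 0. f x \<le> ereal B"
      using eventually_at_right_less[of 0]
      by eventually_elim (use bd in auto)
  qed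
  then show "f 0 \<noteq> \<infinity>" by auto
qed

lemma enn2ereal_fin: "x \<noteq> top \<Longrightarrow> enn2ereal x = ereal (enn2real x)"
proof -
  assume "x \<noteq> top"
  then have "enn2ereal x \<noteq> \<infinity>" by simp
  moreover have "enn2ereal x \<ge> 0" by simp
  ultimately show ?thesis using real_of_ereal_enn2ereal[of x]
    by (cases "enn2ereal x") auto
qed

lemma eexp_cong_AE:
  assumes "AE x in M. g x = g' x"
  shows "eexp M g = eexp M g'"
proof -
  have "(\<integral>\<^sup>+ x. e2ennreal (g x) \<partial>M) = (\<integral>\<^sup>+ x. e2ennreal (g' x) \<partial>M)"
    using assms by (intro nn_integral_cong_AE) auto
  moreover have "(\<integral>\<^sup>+ x. e2ennreal (- g x) \<partial>M) = (\<integral>\<^sup>+ x. e2ennreal (- g' x) \<partial>M)"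
    using assms by (intro nn_integral_cong_AE) auto
  ultimately show ?thesis unfolding eexp_def by simp
qed

lemma eexp_real:
  assumes "integrable M G"
  shows "eexp M (\<lambda>x. ereal (G x)) = ereal (integral\<^sup>L M G)"
proof -
  have m: "(\<lambda>x. ereal (- G x)) = (\<lambda>x. - ereal (G x))" by simp
  have fin: "(\<integral>\<^sup>+ x. ennreal (G x) \<partial>M) \<noteq> \<infinity>" "(\<integral>\<^sup>+ x. ennreal (- G x) \<partial>M) \<noteq> \<infinity>"
    using assms unfolding real_integrable_def by auto
  have "eexp M (\<lambda>x. ereal (G x)) = enn2ereal (\<integral>\<^sup>+ x. ennreal (G x) \<partial>M) - enn2ereal (\<integral>\<^sup>+ x. ennreal (- G x) \<partial>M)"
    unfolding eexp_def by simp
  also have "\<dots> = ereal (enn2real (\<integral>\<^sup>+ x. ennreal (G x) \<partial>M) - enn2real (\<integral>\<^sup>+ x. ennreal (- G x) \<partial>M))"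
    using fin by (simp add: enn2ereal_fin)
  also have "\<dots> = ereal (integral\<^sup>L M G)" using real_lebesgue_integral_def[OF assms] by simp
  finally show ?thesis .
qed

lemma prob_AE_ex:
  assumes "prob_space M" "AE x in M. P x"
  shows "\<exists>x\<in>space M. P x"
proof (rule ccontr)
  assume "\<not> ?thesis"
  then have "AE x in M. P x \<longrightarrow> False" by (intro AE_I2) auto
  from AE_mp[OF assms(2) this] have "AE x in M. False" .
  then show False using prob_space.AE_False[OF assms(1)] by simp
qed

lemma lemmaA:
  fixes \<pi> \<nu> :: "'a measure" and h Z :: "'a \<Rightarrow> real"
  assumes pi: "prob_space \<pi>" and nu: "prob_space \<nu>" and sets: "sets \<nu> = sets \<pi>"
    and ac: "absolutely_continuous \<pi> \<nu>"
    and hm[measurable]: "h \<in> borel_measurable \<pi>" and lam: "lam > 0" and Zi: "integrable \<pi> Z"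
    and le: "AE x in \<pi>. enn2real (RN_deriv \<pi> \<nu> x) * (lam * (h x - c)) \<le> Z x"
  shows "eexp \<nu> (\<lambda>x. ereal (h x)) \<le> ereal (c + (1/lam) * integral\<^sup>L \<pi> Z)"
proof -
  interpret P: prob_space \<pi> by fact
  interpret N: prob_space \<nu> by fact
  define r where "r = RN_deriv \<pi> \<nu>"
  define R where "R x = enn2real (r x)" for x
  have dens: "density \<pi> r = \<nu>" unfolding r_def using P.density_RN_deriv[OF ac sets] .
  have rm[measurable]: "r \<in> borel_measurable \<pi>" unfolding r_def by simp
  have Rm[measurable]: "R \<in> borel_measurable \<pi>" unfolding R_def by simp
  have fin: "AE x in \<pi>. r x \<noteq> \<infinity>" unfolding r_def
    by (rule P.RN_deriv_finite[OF prob_space_imp_sigma_finite[OF nu] ac sets])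
  have rR: "AE x in \<pi>. r x = ennreal (R x)"
    using fin by (rule AE_mp) (auto intro!: AE_I2 simp: R_def ennreal_enn2real less_top)
  have R0: "R x \<ge> 0" for x by (simp add: R_def)
  have hmn: "h \<in> borel_measurable \<nu>" using hm measurable_cong_sets[OF sets refl, of borel] by blast
  have "(\<integral>\<^sup>+ x. ennreal (R x) \<partial>\<pi>) = (\<integral>\<^sup>+ x. r x * 1 \<partial>\<pi>)"
    using rR by (intro nn_integral_cong_AE) auto
  also have "\<dots> = (\<integral>\<^sup>+ x. 1 \<partial>density \<pi> r)" by (rule nn_integral_density[symmetric]) simp_all
  also have "\<dots> = 1" unfolding dens using N.emeasure_space_1 by simp
  finally have intR: "(\<integral>\<^sup>+ x. ennreal (R x) \<partial>\<pi>) = ennreal 1" by simp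
  have Ri: "integrable \<pi> R" by (rule integrableI_nn_integral_finite[OF Rm _ intR]) (simp add: R0)
  have R1: "integral\<^sup>L \<pi> R = 1" using integral_eq_nn_integral[OF Rm] intR R0 by simp
  define G where "G x = R x * h x" for x
  have Gm[measurable]: "G \<in> borel_measurable \<pi>" unfolding G_def by simp
  have pos: "(\<integral>\<^sup>+ x. e2ennreal (ereal (h x)) \<partial>\<nu>) = (\<integral>\<^sup>+ x. ennreal (G x) \<partial>\<pi>)"
  proof -
    have "(\<integral>\<^sup>+ x. e2ennreal (ereal (h x)) \<partial>\<nu>) = (\<integral>\<^sup>+ x. ennreal (h x) \<partial>density \<pi> r)"
      unfolding dens by simp
    also have "\<dots> = (\<integral>\<^sup>+ x. r x * ennreal (h x) \<partial>\<pi>)" by (simp add: nn_integral_density)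
    also have "\<dots> = (\<integral>\<^sup>+ x. ennreal (G x) \<partial>\<pi>)"
      using rR by (intro nn_integral_cong_AE) (auto simp: G_def ennreal_mult' R0)
    finally show ?thesis .
  qed
  have neg: "(\<integral>\<^sup>+ x. e2ennreal (- ereal (h x)) \<partial>\<nu>) = (\<integral>\<^sup>+ x. ennreal (- G x) \<partial>\<pi>)"
  proof -
    have "(\<integral>\<^sup>+ x. e2ennreal (- ereal (h x)) \<partial>\<nu>) = (\<integral>\<^sup>+ x. ennreal (- h x) \<partial>density \<pi> r)"
      unfolding dens by simp
    also have "\<dots> = (\<integral>\<^sup>+ x. r x * ennreal (- h x) \<partial>\<pi>)" by (simp add: nn_integral_density)
    also have "\<dots> = (\<integral>\<^sup>+ x. ennreal (- G x) \<partial>\<pi>)"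
    proof (rule nn_integral_cong_AE)
      show "AE x in \<pi>. r x * ennreal (- h x) = ennreal (- G x)"
        using rR
      proof (rule AE_mp, intro AE_I2 impI)
        fix x assume "r x = ennreal (R x)"
        moreover have "- G x = R x * (- h x)" unfolding G_def by simp
        ultimately show "r x * ennreal (- h x) = ennreal (- G x)"
          using ennreal_mult'[OF R0[of x], of "- h x"] by metis
      qed
    qed
    finally show ?thesis .
  qed
  define Hb where "Hb x = Z x / lam + c * R x" for x
  have Hbi: "integrable \<pi> Hb" unfolding Hb_def using Zi Ri by auto
  have GH: "AE x in \<pi>. G x \<le> Hb x"
    using le
  proof (rule AE_mp, intro AE_I2 impI)
    fix x assume "enn2real (RN_deriv \<pi> \<nu> x) * (lam * (h x - c)) \<le> Z x"
    then have "R x * (lam * (h x - c)) \<le> Z x" unfolding R_def r_def .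
    then have "lam * (R x * h x - c * R x) \<le> Z x" by (simp add: R_def algebra_simps)
    then have "R x * h x - c * R x \<le> Z x / lam" using lam by (simp add: pos_le_divide_eq mult.commute)
    then show "G x \<le> Hb x" unfolding G_def Hb_def by simp
  qed
  have Pfin: "(\<integral>\<^sup>+ x. ennreal (G x) \<partial>\<pi>) \<noteq> \<infinity>"
  proof -
    have "(\<integral>\<^sup>+ x. ennreal (G x) \<partial>\<pi>) \<le> (\<integral>\<^sup>+ x. ennreal (Hb x) \<partial>\<pi>)"
      using GH by (intro nn_integral_mono_AE) (auto intro: ennreal_leI elim: AE_mp)
    moreover have "(\<integral>\<^sup>+ x. ennreal (Hb x) \<partial>\<pi>) \<noteq> \<infinity>" using Hbi unfolding real_integrable_def by auto
    ultimately show ?thesis by (auto simp: top_unique)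
  qed
  show ?thesis
  proof (cases "(\<integral>\<^sup>+ x. ennreal (- G x) \<partial>\<pi>) = \<infinity>")
    case True
    have "eexp \<nu> (\<lambda>x. ereal (h x)) = enn2ereal (\<integral>\<^sup>+ x. ennreal (G x) \<partial>\<pi>) - \<infinity>"
      unfolding eexp_def pos neg True by simp
    also have "\<dots> = -\<infinity>" using Pfin by (simp add: enn2ereal_fin)
    finally show ?thesis by simp
  next
    case False
    have Gi: "integrable \<pi> G" unfolding real_integrable_def using Pfin False by simp
    have "eexp \<nu> (\<lambda>x. ereal (h x)) = ereal (integral\<^sup>L \<pi> G)"
      unfolding eexp_def pos neg using Pfin False real_lebesgue_integral_def[OF Gi]
      by (simp add: enn2ereal_fin)
    also have "integral\<^sup>L \<pi> G \<le> integral\<^sup>L \<pi> Hb" by (rule integral_mono_AE[OF Gi Hbi GH])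
    also have "integral\<^sup>L \<pi> Hb = c + (1/lam) * integral\<^sup>L \<pi> Z"
      unfolding Hb_def using Zi Ri R1
      by (simp add: Bochner_Integration.integral_add integral_divide_zero)
    finally show ?thesis by simp
  qed
qed

lemma RN_facts:
  fixes \<pi> \<nu> :: "'a measure"
  assumes pi: "prob_space \<pi>" and nu: "prob_space \<nu>" and sets: "sets \<nu> = sets \<pi>"
    and ac: "absolutely_continuous \<pi> \<nu>"
  shows "(\<lambda>x. enn2real (RN_deriv \<pi> \<nu> x)) \<in> borel_measurable \<pi>"
    "integrable \<pi> (\<lambda>x. enn2real (RN_deriv \<pi> \<nu> x))"
    "integral\<^sup>L \<pi> (\<lambda>x. enn2real (RN_deriv \<pi> \<nu> x)) = 1"
proof -
  interpret P: prob_space \<pi> by fact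
  interpret N: prob_space \<nu> by fact
  define r where "r = RN_deriv \<pi> \<nu>"
  define R where "R x = enn2real (r x)" for x
  have dens: "density \<pi> r = \<nu>" unfolding r_def using P.density_RN_deriv[OF ac sets] .
  have rm[measurable]: "r \<in> borel_measurable \<pi>" unfolding r_def by simp
  have Rm[measurable]: "R \<in> borel_measurable \<pi>" unfolding R_def by simp
  have fin: "AE x in \<pi>. r x \<noteq> \<infinity>" unfolding r_def
    by (rule P.RN_deriv_finite[OF prob_space_imp_sigma_finite[OF nu] ac sets])
  have rR: "AE x in \<pi>. r x = ennreal (R x)"
    using fin by (rule AE_mp) (auto intro!: AE_I2 simp: R_def ennreal_enn2real less_top)
  have R0: "R x \<ge> 0" for x by (simp add: R_def)
  have "(\<integral>\<^sup>+ x. ennreal (R x) \<partial>\<pi>) = (\<integral>\<^sup>+ x. r x * 1 \<partial>\<pi>)"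
    using rR by (intro nn_integral_cong_AE) auto
  also have "\<dots> = (\<integral>\<^sup>+ x. 1 \<partial>density \<pi> r)" by (rule nn_integral_density[symmetric]) simp_all
  also have "\<dots> = 1" unfolding dens using N.emeasure_space_1 by simp
  finally have intR: "(\<integral>\<^sup>+ x. ennreal (R x) \<partial>\<pi>) = ennreal 1" by simp
  have Ri: "integrable \<pi> R" by (rule integrableI_nn_integral_finite[OF Rm _ intR]) (simp add: R0)
  have R1: "integral\<^sup>L \<pi> R = 1" using integral_eq_nn_integral[OF Rm] intR R0 by simp
  show "(\<lambda>x. enn2real (RN_deriv \<pi> \<nu> x)) \<in> borel_measurable \<pi>"
    "integrable \<pi> (\<lambda>x. enn2real (RN_deriv \<pi> \<nu> x))"
    "integral\<^sup>L \<pi> (\<lambda>x. enn2real (RN_deriv \<pi> \<nu> x)) = 1"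
    using Rm Ri R1 unfolding R_def r_def by auto
qed

lemma f_meas:
  assumes "fdivF f" and R: "R \<in> borel_measurable M" and R0: "\<And>x. R x \<ge> 0"
  shows "(\<lambda>x. f (R x)) \<in> borel_measurable M"
proof -
  have cv: "convex_on {0<..} (freal f)"
    by (rule convex_on_subset[OF fdivF_convex_dom[OF assms(1)]])
       (use fdivF_props(4)[OF assms(1)] in auto)
  have ct: "continuous_on {0<..} (freal f)" by (rule convex_on_continuous[OF _ cv]) simp
  have g: "(\<lambda>x::real. if x \<in> {0<..} then ereal (freal f x) else f 0) \<in> borel_measurable borel"
    by (rule borel_measurable_continuous_on_if) (auto intro!: continuous_on_ereal ct)
  have "(\<lambda>x. if R x \<in> {0<..} then ereal (freal f (R x)) else f 0) \<in> borel_measurable M"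
    using measurable_compose[OF R g] by simp
  moreover have "(\<lambda>x. if R x \<in> {0<..} then ereal (freal f (R x)) else f 0) = (\<lambda>x. f (R x))"
  proof
    fix x show "(if R x \<in> {0<..} then ereal (freal f (R x)) else f 0) = f (R x)"
      using fdivF_pos[OF assms(1), of "R x"] R0[of x] by auto
  qed
  ultimately show ?thesis by simp
qed

lemma fdiv_real:
  fixes \<pi> \<nu> :: "'a measure"
  assumes pi: "prob_space \<pi>" and nu: "prob_space \<nu>" and sets: "sets \<nu> = sets \<pi>"
    and ac: "absolutely_continuous \<pi> \<nu>" and F: "fdivF f"
    and t0: "fconj f (ereal t0) \<noteq> \<infinity>" and D: "fdiv f \<nu> \<pi> \<noteq> \<infinity>"
  shows "AE x in \<pi>. f (enn2real (RN_deriv \<pi> \<nu> x)) \<noteq> \<infinity>"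
    "integrable \<pi> (\<lambda>x. freal f (enn2real (RN_deriv \<pi> \<nu> x)))"
    "fdiv f \<nu> \<pi> = ereal (integral\<^sup>L \<pi> (\<lambda>x. freal f (enn2real (RN_deriv \<pi> \<nu> x))))"
proof -
  note RN = RN_facts[OF pi nu sets ac]
  define R where "R x = enn2real (RN_deriv \<pi> \<nu> x)" for x
  have Rm[measurable]: "R \<in> borel_measurable \<pi>" unfolding R_def using RN(1) .
  have Ri: "integrable \<pi> R" unfolding R_def using RN(2) .
  have R0: "R x \<ge> 0" for x unfolding R_def by simp
  have fm[measurable]: "(\<lambda>x. f (R x)) \<in> borel_measurable \<pi>" using f_meas[OF F Rm R0] .
  have De: "fdiv f \<nu> \<pi> = eexp \<pi> (\<lambda>x. f (R x))" unfolding fdiv_def R_def using ac sets by simp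
  have Pfin: "(\<integral>\<^sup>+ x. e2ennreal (f (R x)) \<partial>\<pi>) \<noteq> \<infinity>"
  proof
    assume "(\<integral>\<^sup>+ x. e2ennreal (f (R x)) \<partial>\<pi>) = \<infinity>"
    then have "eexp \<pi> (\<lambda>x. f (R x)) = \<infinity>" unfolding eexp_def by simp
    then show False using D De by simp
  qed
  have "AE x in \<pi>. e2ennreal (f (R x)) \<noteq> \<infinity>"
    by (rule nn_integral_PInf_AE[OF _ Pfin]) simp
  then have AEfin: "AE x in \<pi>. f (R x) \<noteq> \<infinity>"
    by (rule AE_mp) (auto intro!: AE_I2)
  then show "AE x in \<pi>. f (enn2real (RN_deriv \<pi> \<nu> x)) \<noteq> \<infinity>" unfolding R_def .
  have AEeq: "AE x in \<pi>. f (R x) = ereal (freal f (R x))"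
    using AEfin by (rule AE_mp) (auto intro!: AE_I2 fdivF_fin(1)[OF F])
  define FR where "FR x = freal f (R x)" for x
  have FRm[measurable]: "FR \<in> borel_measurable \<pi>" unfolding FR_def freal_def by simp
  define psi where "psi = real_of_ereal (fconj f (ereal t0))"
  define Bd where "Bd x = \<bar>psi\<bar> + \<bar>t0\<bar> * R x" for x
  interpret P: prob_space \<pi> by fact
  have Bdi: "integrable \<pi> Bd" unfolding Bd_def using Ri by auto
  have pos: "(\<integral>\<^sup>+ x. ennreal (FR x) \<partial>\<pi>) \<noteq> \<infinity>"
  proof -
    have "(\<integral>\<^sup>+ x. ennreal (FR x) \<partial>\<pi>) = (\<integral>\<^sup>+ x. e2ennreal (f (R x)) \<partial>\<pi>)"
    proof (rule nn_integral_cong_AE)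
      show "AE x in \<pi>. ennreal (FR x) = e2ennreal (f (R x))"
        using AEeq by (rule AE_mp) (auto intro!: AE_I2 simp: FR_def)
    qed
    then show ?thesis using Pfin by simp
  qed
  have neg: "(\<integral>\<^sup>+ x. ennreal (- FR x) \<partial>\<pi>) \<noteq> \<infinity>"
  proof -
    have "(\<integral>\<^sup>+ x. ennreal (- FR x) \<partial>\<pi>) \<le> (\<integral>\<^sup>+ x. ennreal (Bd x) \<partial>\<pi>)"
    proof (rule nn_integral_mono_AE)
      show "AE x in \<pi>. ennreal (- FR x) \<le> ennreal (Bd x)"
        using AEeq
      proof (rule AE_mp, intro AE_I2 impI)
        fix x assume e: "f (R x) = ereal (freal f (R x))"
        have "f (R x) \<ge> ereal (R x * t0 - psi)"
          unfolding psi_def by (rule fdivF_lower_conj[OF F t0 R0])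
        then have "FR x \<ge> R x * t0 - psi" using e unfolding FR_def by simp
        moreover have "R x * t0 \<ge> - (\<bar>t0\<bar> * R x)"
        proof -
          have "\<bar>R x * t0\<bar> = \<bar>t0\<bar> * R x" using R0[of x] by (simp add: abs_mult)
          then show ?thesis using abs_ge_minus_self[of "R x * t0"] by linarith
        qed
        ultimately have "- FR x \<le> Bd x" unfolding Bd_def by linarith
        then show "ennreal (- FR x) \<le> ennreal (Bd x)" by (rule ennreal_leI)
      qed
    qed
    moreover have "(\<integral>\<^sup>+ x. ennreal (Bd x) \<partial>\<pi>) \<noteq> \<infinity>" using Bdi unfolding real_integrable_def by auto
    ultimately show ?thesis by (auto simp: top_unique)
  qed
  have FRi: "integrable \<pi> FR" unfolding real_integrable_def using pos neg by simp
  then show "integrable \<pi> (\<lambda>x. freal f (enn2real (RN_deriv \<pi> \<nu> x)))" unfolding FR_def R_def .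
  have "fdiv f \<nu> \<pi> = eexp \<pi> (\<lambda>x. ereal (FR x))" unfolding De FR_def by (rule eexp_cong_AE[OF AEeq])
  also have "\<dots> = ereal (integral\<^sup>L \<pi> FR)" by (rule eexp_real[OF FRi])
  finally show "fdiv f \<nu> \<pi> = ereal (integral\<^sup>L \<pi> (\<lambda>x. freal f (enn2real (RN_deriv \<pi> \<nu> x))))"
    unfolding FR_def R_def .
qed

lemma ereal_pos_mult_inf: "a > 0 \<Longrightarrow> ereal a * \<infinity> = \<infinity>" by simp

lemma part2:
  fixes \<pi> \<nu> :: "'a measure"
  assumes pi: "prob_space \<pi>" and nu: "prob_space \<nu>" and sets: "sets \<nu> = sets \<pi>"
    and ac: "absolutely_continuous \<pi> \<nu>" and F: "fdivF f" and lam: "lam > 0"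
    and hm: "h \<in> borel_measurable \<pi>"
  shows "eexp \<nu> (\<lambda>x. ereal (h x))
              \<le> ereal (1 / lam) * Lfpi f \<pi> (\<lambda>x. lam * (h x - c)) + ereal c
                 + ereal (1 / lam) * fdiv f \<nu> \<pi>"
proof -
  interpret P: prob_space \<pi> by fact
  define g where "g x = lam * (h x - c)" for x
  have il: "1 / lam > 0" using lam by simp
  show ?thesis
  proof (cases "eintegrable \<pi> (\<lambda>x. fconj f (ereal (g x))) \<and> fdiv f \<nu> \<pi> \<noteq> \<infinity>")
    case False
    then have "ereal (1 / lam) * Lfpi f \<pi> (\<lambda>x. lam * (h x - c)) + ereal c
                 + ereal (1 / lam) * fdiv f \<nu> \<pi> = \<infinity>"
      using il unfolding Lfpi_def g_def by auto
    then show ?thesis by (metis ereal_less_eq(1))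
  next
    case True
    then have ei: "eintegrable \<pi> (\<lambda>x. fconj f (ereal (g x)))" and D: "fdiv f \<nu> \<pi> \<noteq> \<infinity>" by auto
    have AEpsi: "AE x in \<pi>. \<bar>fconj f (ereal (g x))\<bar> \<noteq> \<infinity>" and
      psii: "integrable \<pi> (\<lambda>x. real_of_ereal (fconj f (ereal (g x))))"
      using ei unfolding eintegrable_def by auto
    from prob_AE_ex[OF pi AEpsi] obtain x0 where "x0 \<in> space \<pi>" "\<bar>fconj f (ereal (g x0))\<bar> \<noteq> \<infinity>"
      by (rule bexE)
    then have t0: "fconj f (ereal (g x0)) \<noteq> \<infinity>" by auto
    note FD = fdiv_real[OF pi nu sets ac F t0 D]
    note RN = RN_facts[OF pi nu sets ac]
    define R where "R x = enn2real (RN_deriv \<pi> \<nu> x)" for x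
    define L where "L = integral\<^sup>L \<pi> (\<lambda>x. real_of_ereal (fconj f (ereal (g x))))"
    define Dr where "Dr = integral\<^sup>L \<pi> (\<lambda>x. freal f (R x))"
    have Le: "Lfpi f \<pi> (\<lambda>x. lam * (h x - c)) = ereal L"
      using ei unfolding Lfpi_def L_def g_def by simp
    have De: "fdiv f \<nu> \<pi> = ereal Dr" using FD(3) unfolding Dr_def R_def .
    define Z where "Z x = real_of_ereal (fconj f (ereal (g x))) + freal f (R x)" for x
    have Zi: "integrable \<pi> Z" unfolding Z_def R_def using psii FD(2) by auto
    have ZI: "integral\<^sup>L \<pi> Z = L + Dr" unfolding Z_def L_def Dr_def R_def using psii FD(2)
      by (simp add: Bochner_Integration.integral_add)
    have pw: "AE x in \<pi>. R x * (lam * (h x - c)) \<le> Z x"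
      using AEpsi FD(1)
    proof (eventually_elim)
      case (elim x)
      have R0: "R x \<ge> 0" unfolding R_def by simp
      have fe: "f (R x) = ereal (freal f (R x))" using fdivF_fin(1)[OF F] elim(2) unfolding R_def by simp
      obtain p where pe: "fconj f (ereal (g x)) = ereal p" using elim(1) by (cases "fconj f (ereal (g x))") auto
      have "ereal (R x) * ereal (g x) - f (R x) \<le> fconj f (ereal (g x))" by (rule fconj_upper[OF R0])
      then have "R x * g x - freal f (R x) \<le> real_of_ereal (fconj f (ereal (g x)))"
        unfolding fe pe by simp
      then show ?case unfolding Z_def g_def by simp
    qed
    have "eexp \<nu> (\<lambda>x. ereal (h x)) \<le> ereal (c + (1/lam) * integral\<^sup>L \<pi> Z)"
      by (rule lemmaA[OF pi nu sets ac hm lam Zi]) (use pw in \<open>simp add: R_def\<close>)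
    also have "\<dots> = ereal (1 / lam) * Lfpi f \<pi> (\<lambda>x. lam * (h x - c)) + ereal c
                 + ereal (1 / lam) * fdiv f \<nu> \<pi>"
      unfolding Le De ZI by (simp add: algebra_simps add_divide_distrib)
    finally show ?thesis .
  qed
qed

lemma part1:
  fixes \<pi> \<nu> :: "'a measure"
  assumes pi: "prob_space \<pi>" and nu: "prob_space \<nu>" and sets: "sets \<nu> = sets \<pi>"
    and ac: "absolutely_continuous \<pi> \<nu>" and Fc: "fdivFc f" and sg: "conj_subgrad f fs'"
    and lam: "lam > 0" and hm: "h \<in> borel_measurable \<pi>"
  shows "eexp \<nu> (\<lambda>x. ereal (h x))
              \<le> ereal (1 / lam) * Dtil f fs' \<pi> (\<lambda>x. lam * (h x - c)) + ereal c
                 + ereal (1 / lam) * fdiv f \<nu> \<pi>"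
proof -
  interpret P: prob_space \<pi> by fact
  note FP = fc_props[OF Fc]
  note F = FP(1)
  define g where "g x = lam * (h x - c)" for x
  have il: "1 / lam > 0" using lam by simp
  show ?thesis
  proof (cases "eintegrable \<pi> (\<lambda>x. fconj f (ereal (g x))) \<and> fdiv f \<nu> \<pi> \<noteq> \<infinity>")
    case False
    then have "ereal (1 / lam) * Dtil f fs' \<pi> (\<lambda>x. lam * (h x - c)) + ereal c
                 + ereal (1 / lam) * fdiv f \<nu> \<pi> = \<infinity>"
      using il unfolding Dtil_def g_def by auto
    then show ?thesis by (metis ereal_less_eq(1))
  next
    case True
    then have ei: "eintegrable \<pi> (\<lambda>x. fconj f (ereal (g x)))" and D: "fdiv f \<nu> \<pi> \<noteq> \<infinity>" by auto
    show ?thesis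
    proof (cases "integrable \<pi> (\<lambda>x. fs' (g x))")
      case False
      then have "Dtil f fs' \<pi> (\<lambda>x. lam * (h x - c)) = Lfpi f \<pi> (\<lambda>x. lam * (h x - c))"
        using ei unfolding Dtil_def g_def by simp
      then show ?thesis using part2[OF pi nu sets ac F lam hm] by simp
    next
      case True
      then have yi: "integrable \<pi> (\<lambda>x. fs' (g x))" .
      have AEpsi: "AE x in \<pi>. \<bar>fconj f (ereal (g x))\<bar> \<noteq> \<infinity>" and
        psii: "integrable \<pi> (\<lambda>x. real_of_ereal (fconj f (ereal (g x))))"
        using ei unfolding eintegrable_def by auto
      from prob_AE_ex[OF pi AEpsi] obtain x0 where "x0 \<in> space \<pi>" "\<bar>fconj f (ereal (g x0))\<bar> \<noteq> \<infinity>"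
        by (rule bexE)
      then have t0: "fconj f (ereal (g x0)) \<noteq> \<infinity>" by auto
      note FD = fdiv_real[OF pi nu sets ac F t0 D]
      note RN = RN_facts[OF pi nu sets ac]
      define R where "R x = enn2real (RN_deriv \<pi> \<nu> x)" for x
      define L where "L = integral\<^sup>L \<pi> (\<lambda>x. real_of_ereal (fconj f (ereal (g x))))"
      define Dr where "Dr = integral\<^sup>L \<pi> (\<lambda>x. freal f (R x))"
      define m where "m = integral\<^sup>L \<pi> (\<lambda>x. fs' (g x))"
      define F' where "F' = deriv (freal f)"
      have Le: "Lfpi f \<pi> (\<lambda>x. lam * (h x - c)) = ereal L"
        using ei unfolding Lfpi_def L_def g_def by simp
      have De: "fdiv f \<nu> \<pi> = ereal Dr" using FD(3) unfolding Dr_def R_def .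
      have Dte: "Dtil f fs' \<pi> (\<lambda>x. lam * (h x - c)) = ereal L + fder f m - fconj f (fder f m)"
        using ei yi unfolding Dtil_def m_def g_def Le[unfolded g_def] by (simp add: Let_def)
      have Ri: "integrable \<pi> R" and R1: "integral\<^sup>L \<pi> R = 1" using RN(2,3) unfolding R_def by auto
      have R0: "R x \<ge> 0" for x unfolding R_def by simp
      have F1: "freal f 1 = 0" using fdivF_props(2)[OF F] unfolding freal_def by simp
      have AEall: "AE x in \<pi>. fconj f (ereal (g x)) \<noteq> \<infinity> \<and> f (R x) \<noteq> \<infinity>"
        using AEpsi FD(1) unfolding R_def by eventually_elim auto
      have yv0: "AE x in \<pi>. fs' (g x) \<ge> 0"
        using AEall by (rule AE_mp) (auto intro!: AE_I2 sg_basic(1)[OF Fc sg])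
      have m0: "m \<ge> 0" unfolding m_def using yv0 by (rule integral_nonneg_AE)
      have psi_low: "Y * t - freal f Y \<le> real_of_ereal (fconj f (ereal t))"
        if as1: "fconj f (ereal t) \<noteq> \<infinity>" and as2: "Y \<ge> 0" and as3: "f Y \<noteq> \<infinity>" for Y t
      proof -
        obtain p where pe: "fconj f (ereal t) = ereal p" using as1 fconj_ge[OF F, of t]
          by (cases "fconj f (ereal t)") auto
        have fe: "f Y = ereal (freal f Y)" using fdivF_fin(1)[OF F as3] .
        have "ereal Y * ereal t - f Y \<le> fconj f (ereal t)" by (rule fconj_upper[OF as2])
        then show ?thesis unfolding fe pe by simp
      qed
      show ?thesis
      proof (cases "m > 0")
        case True
        define Cc where "Cc = freal f 1 - freal f m - F' m*(1-m)"
        define al where "al = F' 1 - F' m"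
        define K where "K = deriv (deriv (freal f)) m*(1-m)"
        have fdm: "fder f m = ereal (F' m)" unfolding fder_def F'_def using True by simp
        have fcm: "fconj f (ereal (F' m)) = ereal (m * F' m - freal f m)"
          unfolding F'_def by (rule fconj_at_deriv[OF F True FP(3)[OF True]])
        have Dtv: "Dtil f fs' \<pi> (\<lambda>x. lam * (h x - c)) = ereal (L - Cc)"
          unfolding Dte fdm fcm Cc_def F1 by (simp add: algebra_simps)
        define Z where "Z x = real_of_ereal (fconj f (ereal (g x))) + freal f (R x)
            - (Cc + al*(R x - 1) - K*(fs' (g x) - m))" for x
        have Zi: "integrable \<pi> Z" unfolding Z_def R_def using psii FD(2) Ri yi unfolding R_def by auto
        have ZI: "integral\<^sup>L \<pi> Z = L + Dr - Cc"
        proof -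
          have "integral\<^sup>L \<pi> Z = L + Dr - (Cc + al*(integral\<^sup>L \<pi> R - 1) - K*(m - m))"
            unfolding Z_def L_def Dr_def m_def using psii FD(2) Ri yi unfolding R_def
            by (simp add: Bochner_Integration.integral_add Bochner_Integration.integral_diff P.prob_space)
          then show ?thesis using R1 by simp
        qed
        have pw: "AE x in \<pi>. R x * (lam * (h x - c)) \<le> Z x"
          using AEall yv0
        proof (eventually_elim)
          case (elim x)
          define t where "t = g x"
          define Y where "Y = fs' (g x)"
          have fin: "fconj f (ereal t) \<noteq> \<infinity>" using elim unfolding t_def by simp
          have fR: "f (R x) \<noteq> \<infinity>" using elim by simp
          have Y0: "Y \<ge> 0" using elim unfolding Y_def by simp
          have key: "R x * t - freal f (R x) - real_of_ereal (fconj f (ereal t))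
              \<le> - (Cc + al*(R x - 1) - K*(Y - m))"
          proof (cases "Y > 0")
            case True
            have tY: "t = F' Y" using sg_pos[OF Fc sg fin] True unfolding Y_def t_def F'_def by simp
            have fY: "f Y \<noteq> \<infinity>" using fdivF_props(4)[OF F True] .
            have lo: "Y * t - freal f Y \<le> real_of_ereal (fconj f (ereal t))"
              using psi_low[OF fin Y0 fY] .
            have br: "freal f (R x) - freal f Y - F' Y*(R x - Y) \<ge> Cc + al*(R x - 1) - K*(Y - m)"
            proof (cases "R x > 0")
              case True
              then show ?thesis using fc_breg[OF Fc True \<open>Y > 0\<close> \<open>m > 0\<close>]
                unfolding Cc_def al_def K_def F'_def by simp
            next
              case False
              then have "R x = 0" using R0[of x] by simp
              then have f0: "f 0 \<noteq> \<infinity>" using fR by simp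
              show ?thesis using fc_breg_x0[OF Fc f0 \<open>Y > 0\<close> \<open>m > 0\<close>] \<open>R x = 0\<close>
                unfolding Cc_def al_def K_def F'_def by simp
            qed
            show ?thesis using lo br unfolding tY by (simp add: algebra_simps)
          next
            case False
            then have Yz: "Y = 0" using Y0 by simp
            have tz: "\<And>z. z > 0 \<Longrightarrow> t \<le> F' z" using sg_zero(1)[OF Fc sg fin] Yz
              unfolding Y_def t_def F'_def by simp
            have f0: "f 0 \<noteq> \<infinity>" using sg_zero(2)[OF Fc sg fin] Yz unfolding Y_def t_def by simp
            have lo: "0 * t - freal f 0 \<le> real_of_ereal (fconj f (ereal t))"
              using psi_low[OF fin _ f0] by simp
            have br: "freal f (R x) - freal f 0 - t * R x \<ge> Cc + al*(R x - 1) - K*(0 - m)"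
              using fc_breg_y0[OF Fc f0 R0 \<open>m > 0\<close> tz[unfolded F'_def]]
              unfolding Cc_def al_def K_def F'_def by simp
            show ?thesis using lo br Yz by (simp add: algebra_simps)
          qed
          then show ?case unfolding Z_def t_def Y_def g_def by simp
        qed
        have "eexp \<nu> (\<lambda>x. ereal (h x)) \<le> ereal (c + (1/lam) * integral\<^sup>L \<pi> Z)"
          by (rule lemmaA[OF pi nu sets ac hm lam Zi]) (use pw in \<open>simp add: R_def\<close>)
        also have "\<dots> = ereal (1 / lam) * Dtil f fs' \<pi> (\<lambda>x. lam * (h x - c)) + ereal c
                 + ereal (1 / lam) * fdiv f \<nu> \<pi>"
          unfolding Dtv De ZI by (simp add: algebra_simps add_divide_distrib diff_divide_distrib)
        finally show ?thesis .
      next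
        case False
        then have mz: "m = 0" using m0 by simp
        have AEy: "AE x in \<pi>. fs' (g x) = 0"
          using integral_nonneg_eq_0_iff_AE[OF yi yv0] mz unfolding m_def by simp
        have AEall2: "AE x in \<pi>. fconj f (ereal (g x)) \<noteq> \<infinity> \<and> f (R x) \<noteq> \<infinity> \<and> fs' (g x) = 0"
          using AEall AEy by eventually_elim auto
        from prob_AE_ex[OF pi AEall2] obtain x1 where x1: "fconj f (ereal (g x1)) \<noteq> \<infinity>" "fs' (g x1) = 0"
          by blast
        have t1: "\<And>z. z > 0 \<Longrightarrow> g x1 \<le> F' z" using sg_zero(1)[OF Fc sg x1] unfolding F'_def by simp
        have f0: "f 0 \<noteq> \<infinity>" using sg_zero(2)[OF Fc sg x1] .
        define D0 where "D0 = (INF y\<in>{0<..}. ereal (F' y))"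
        have fd0: "fder f m = D0" unfolding fder_def D0_def F'_def mz by simp
        have D0lo: "ereal (g x1) \<le> D0" unfolding D0_def by (rule INF_greatest) (use t1 in auto)
        have D0up: "D0 \<le> ereal (F' 1)" unfolding D0_def by (rule INF_lower) simp
        obtain d0 where d0: "D0 = ereal d0" using D0lo D0up by (cases D0) auto
        have d0le: "d0 \<le> F' z" if "z > 0" for z
        proof -
          have "D0 \<le> ereal (F' z)" unfolding D0_def by (rule INF_lower) (use that in simp)
          then show ?thesis using d0 by simp
        qed
        have led0: "t \<le> d0" if "\<And>z. z > 0 \<Longrightarrow> t \<le> F' z" for t
        proof -
          have "ereal t \<le> D0" unfolding D0_def by (rule INF_greatest) (use that in auto)
          then show ?thesis using d0 by simp
        qed
        have f0e: "f 0 = ereal (freal f 0)" using fdivF_fin(1)[OF F f0] .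
        have fcd0: "fconj f (ereal d0) = ereal (- freal f 0)"
        proof (rule antisym)
          show "fconj f (ereal d0) \<le> ereal (- freal f 0)"
            unfolding fconj_def
          proof (rule SUP_least)
            fix x :: real assume x: "x \<in> {0..}"
            show "ereal x * ereal d0 - f x \<le> ereal (- freal f 0)"
            proof (cases "f x = \<infinity>")
              case True then show ?thesis by simp
            next
              case False
              have fx: "f x = ereal (freal f x)" using fdivF_fin(1)[OF F False] .
              have "freal f x - freal f 0 \<ge> d0 * x"
              proof (cases "x > 0")
                case True
                show ?thesis using fc_mvt[OF Fc f0 True, of d0] d0le unfolding F'_def by simp
              next
                case False then have "x = 0" using x by simp
                then show ?thesis by simp
              qed
              then show ?thesis unfolding fx by (simp add: algebra_simps)
            qed
          qed
          have "ereal 0 * ereal d0 - f 0 \<le> fconj f (ereal d0)" by (rule fconj_upper) simp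
          then show "ereal (- freal f 0) \<le> fconj f (ereal d0)" unfolding f0e by simp
        qed
        have Dtv: "Dtil f fs' \<pi> (\<lambda>x. lam * (h x - c)) = ereal (L + d0 + freal f 0)"
          unfolding Dte fd0 d0 fcd0 by simp
        define Z where "Z x = real_of_ereal (fconj f (ereal (g x))) + freal f (R x)
            + freal f 0 + d0 - (F' 1 - d0)*(R x - 1)" for x
        have Zi: "integrable \<pi> Z" unfolding Z_def using psii FD(2) Ri unfolding R_def by auto
        have ZI: "integral\<^sup>L \<pi> Z = L + Dr + freal f 0 + d0"
        proof -
          have "integral\<^sup>L \<pi> Z = L + Dr + freal f 0 + d0 - (F' 1 - d0)*(integral\<^sup>L \<pi> R - 1)"
            unfolding Z_def L_def Dr_def using psii FD(2) Ri unfolding R_def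
            by (simp add: Bochner_Integration.integral_add Bochner_Integration.integral_diff P.prob_space)
          then show ?thesis using R1 by simp
        qed
        have pw: "AE x in \<pi>. R x * (lam * (h x - c)) \<le> Z x"
          using AEall2
        proof (eventually_elim)
          case (elim x)
          define t where "t = g x"
          have fin: "fconj f (ereal t) \<noteq> \<infinity>" using elim unfolding t_def by simp
          have fR: "f (R x) \<noteq> \<infinity>" using elim by simp
          have tz: "\<And>z. z > 0 \<Longrightarrow> t \<le> F' z" using sg_zero(1)[OF Fc sg fin] elim
            unfolding t_def F'_def by simp
          have td: "t \<le> d0" by (rule led0[OF tz])
          have lo: "0 * t - freal f 0 \<le> real_of_ereal (fconj f (ereal t))"
            using psi_low[OF fin _ f0] by simp
          have tg: "freal f (R x) \<ge> freal f 1 + F' 1 * (R x - 1)"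
            unfolding F'_def by (rule fdivF_tangent[OF F _ FP(3) fR]) simp_all
          have "R x * t \<le> R x * d0" using td R0[of x] by (simp add: mult_left_mono)
          then have "R x * t \<le> Z x" using lo tg F1 unfolding Z_def t_def
            by (simp add: algebra_simps)
          then show ?case unfolding t_def g_def by simp
        qed
        have "eexp \<nu> (\<lambda>x. ereal (h x)) \<le> ereal (c + (1/lam) * integral\<^sup>L \<pi> Z)"
          by (rule lemmaA[OF pi nu sets ac hm lam Zi]) (use pw in \<open>simp add: R_def\<close>)
        also have "\<dots> = ereal (1 / lam) * Dtil f fs' \<pi> (\<lambda>x. lam * (h x - c)) + ereal c
                 + ereal (1 / lam) * fdiv f \<nu> \<pi>"
          unfolding Dtv De ZI by (simp add: algebra_simps add_divide_distrib)
        finally show ?thesis .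
      qed
    qed
  qed
qed

theorem theorem3:
  fixes \<pi> \<nu> :: "'a measure"
  assumes "prob_space \<pi>" and "prob_space \<nu>" and "sets \<nu> = sets \<pi>"
    and "absolutely_continuous \<pi> \<nu>"
  shows "(\<forall>f fs' (lam::real) (c::real) h.
            fdivFc f \<and> conj_subgrad f fs' \<and> lam > 0 \<and> h \<in> borel_measurable \<pi> \<longrightarrow>
            eexp \<nu> (\<lambda>x. ereal (h x))
              \<le> ereal (1 / lam) * Dtil f fs' \<pi> (\<lambda>x. lam * (h x - c)) + ereal c
                 + ereal (1 / lam) * fdiv f \<nu> \<pi>)
       \<and> (\<forall>f (lam::real) (c::real) h.
            fdivF f \<and> lam > 0 \<and> h \<in> borel_measurable \<pi> \<longrightarrow>
            eexp \<nu> (\<lambda>x. ereal (h x))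
              \<le> ereal (1 / lam) * Lfpi f \<pi> (\<lambda>x. lam * (h x - c)) + ereal c
                 + ereal (1 / lam) * fdiv f \<nu> \<pi>)"
  using part1[OF assms] part2[OF assms] by blast

end
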